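(* Let $d$ be a nonnegative integer and let $P_n(x_1,\dots,x_n)$ be the terms defined by $P_0=1$ and $P_{n+1}=(P_n-x_{n+1})\wedge x_{n+1}$. A co-Heyting algebra $L$ satisfies $\dim L\le d$ if and only if $L$ satisfies the identity $P_{d+1}(x_1,\dots,x_{d+1})=0$ (for all $x_1,\dots,x_{d+1}\in L$).
   Context: A co-Heyting algebra is a bounded distributive lattice $(L,0,1,\vee,\wedge)$ such that $a-b=\min\{c\in L: a\le b\vee c\}$ exists for all $a,b$. $\operatorname{Spec}L$ is the set of prime filters ordered by inclusion; the coheight of a prime filter is its cofoundation rank in $\operatorname{Spec}L$ (foundation rank for reverse inclusion: rank $\ge\beta+1$ iff some strictly larger prime filter has rank $\ge\beta$, limits by intersection). $\dim L=\sup\{\operatorname{coheight}\mathfrak p:\mathfrak p\in\operatorname{Spec}L\}$ (the dimension of the element $1$). *)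

theory Defs
  imports Main
begin

definition co_heyting :: "'a::{distrib_lattice,bounded_lattice} itself \<Rightarrow> bool" where
  "co_heyting _ \<longleftrightarrow> (\<forall>a b::'a. \<exists>c. a \<le> sup b c \<and> (\<forall>c'. a \<le> sup b c' \<longrightarrow> c \<le> c'))"

definition cdiff :: "'a::{distrib_lattice,bounded_lattice} \<Rightarrow> 'a \<Rightarrow> 'a" where
  "cdiff a b = (LEAST c. a \<le> sup b c)"

fun Pterm :: "(nat \<Rightarrow> 'a::{distrib_lattice,bounded_lattice}) \<Rightarrow> nat \<Rightarrow> 'a" where
  "Pterm x 0 = top"
| "Pterm x (Suc n) = inf (cdiff (Pterm x n) (x (Suc n))) (x (Suc n))"

definition prime_filter :: "'a::{distrib_lattice,bounded_lattice} set \<Rightarrow> bool" where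
  "prime_filter F \<longleftrightarrow> top \<in> F \<and> bot \<notin> F
     \<and> (\<forall>a b. a \<in> F \<longrightarrow> a \<le> b \<longrightarrow> b \<in> F)
     \<and> (\<forall>a b. a \<in> F \<longrightarrow> b \<in> F \<longrightarrow> inf a b \<in> F)
     \<and> (\<forall>a b. sup a b \<in> F \<longrightarrow> a \<in> F \<or> b \<in> F)"

text \<open>coheight_ge p n: the coheight (cofoundation rank in Spec L) of p is \<ge> n, for finite n:
  rank \<ge> 0 always; rank \<ge> n+1 iff some strictly larger prime filter has rank \<ge> n.\<close>
fun coheight_ge :: "'a::{distrib_lattice,bounded_lattice} set \<Rightarrow> nat \<Rightarrow> bool" where
  "coheight_ge p 0 = True"
| "coheight_ge p (Suc n) = (\<exists>q. prime_filter q \<and> p \<subset> q \<and> coheight_ge q n)"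

definition dim_le :: "'a::{distrib_lattice,bounded_lattice} itself \<Rightarrow> nat \<Rightarrow> bool" where
  "dim_le _ d \<longleftrightarrow> (\<forall>p::'a set. prime_filter p \<longrightarrow> \<not> coheight_ge p (Suc d))"

end

theory Submission
  imports Defs
begin

lemma cdiff_props:
  assumes "co_heyting TYPE('a::{distrib_lattice,bounded_lattice})"
  shows "(a::'a) \<le> sup b (cdiff a b)" and "a \<le> sup b c \<Longrightarrow> cdiff a b \<le> c"
proof -
  obtain m where m: "a \<le> sup b m" "\<forall>c'. a \<le> sup b c' \<longrightarrow> m \<le> c'"
    using assms unfolding co_heyting_def by blast
  have e: "cdiff a b = m" unfolding cdiff_def by (rule Least_equality) (use m in auto)
  show "a \<le> sup b (cdiff a b)" using e m by simp
  show "a \<le> sup b c \<Longrightarrow> cdiff a b \<le> c" using e m by simp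
qed

lemma Pterm_cong: "(\<forall>i. 1 \<le> i \<longrightarrow> i \<le> n \<longrightarrow> x i = y i) \<Longrightarrow> Pterm x n = Pterm y n"
  by (induction n) auto

lemma easy_in:
  assumes ch: "co_heyting TYPE('a::{distrib_lattice,bounded_lattice})"
    and q: "prime_filter (q::'a set)" and "a \<in> q" "b \<notin> q"
  shows "cdiff a b \<in> q"
proof -
  have "sup b (cdiff a b) \<in> q" using q assms(3) cdiff_props(1)[OF ch, of a b]
    unfolding prime_filter_def by blast
  then show ?thesis using q assms(4) unfolding prime_filter_def by blast
qed

lemma dir1:
  assumes ch: "co_heyting TYPE('a::{distrib_lattice,bounded_lattice})"
  shows "\<forall>(p::'a set) m x. prime_filter p \<longrightarrow> coheight_ge p n \<longrightarrow> Pterm x m \<in> p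
     \<longrightarrow> (\<exists>x' (r::'a set). prime_filter r \<and> Pterm x' (m+n) \<in> r)"
proof (induction n)
  case 0
  show ?case
  proof (intro allI impI)
    fix p :: "'a set" and m x assume "prime_filter p" "Pterm x m \<in> p"
    then show "\<exists>x' (r::'a set). prime_filter r \<and> Pterm x' (m + 0) \<in> r" by auto
  qed
next
  case (Suc n)
  show ?case
  proof (intro allI impI)
    fix p :: "'a set" and m x
    assume p: "prime_filter p" and c: "coheight_ge p (Suc n)" and P: "Pterm x m \<in> p"
    obtain q where q: "prime_filter q" "p \<subset> q" "coheight_ge q n" using c by auto
    obtain a where a: "a \<in> q" "a \<notin> p" using q(2) by blast
    define x' where "x' = x(Suc m := a)"
    have "Pterm x' m = Pterm x m" by (rule Pterm_cong) (auto simp: x'_def)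
    then have "Pterm x' (Suc m) = inf (cdiff (Pterm x m) a) a" by (simp add: x'_def)
    moreover have "cdiff (Pterm x m) a \<in> q" using easy_in[OF ch p P a(2)] q(2) by blast
    ultimately have "Pterm x' (Suc m) \<in> q" using a(1) q(1) unfolding prime_filter_def by auto
    then obtain x'' and r :: "'a set" where "prime_filter r" "Pterm x'' (Suc m + n) \<in> r"
      using Suc.IH q by blast
    then show "\<exists>x' (r::'a set). prime_filter r \<and> Pterm x' (m + Suc n) \<in> r" by auto
  qed
qed

lemma pft:
  fixes J :: "'a::{distrib_lattice,bounded_lattice} set"
  assumes J0: "bot \<in> J" and Jd: "\<forall>c d. c \<in> J \<longrightarrow> d \<le> c \<longrightarrow> d \<in> J"
    and Js: "\<forall>c d. c\<in>J \<longrightarrow> d\<in>J \<longrightarrow> sup c d \<in> J" and aJ: "a \<notin> J"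
  shows "\<exists>F. prime_filter F \<and> a \<in> F \<and> F \<inter> J = {}"
proof -
  define A where "A = {F. a \<in> F \<and> (\<forall>x y. x \<in> F \<longrightarrow> x \<le> y \<longrightarrow> y \<in> F)
     \<and> (\<forall>x y. x\<in>F \<longrightarrow> y\<in>F \<longrightarrow> inf x y \<in> F) \<and> F \<inter> J = {}}"
  have up: "{y. a \<le> y} \<in> A" unfolding A_def using Jd aJ by auto
  have "\<exists>M\<in>A. \<forall>X\<in>A. M \<subseteq> X \<longrightarrow> X = M"
  proof (rule subset_Zorn_nonempty)
    show "A \<noteq> {}" using up by blast
  next
    fix C assume C: "C \<noteq> {}" "subset.chain A C"
    have CA: "C \<subseteq> A" and ch: "\<forall>X\<in>C. \<forall>Y\<in>C. X \<subseteq> Y \<or> Y \<subseteq> X"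
      using C(2) unfolding subset.chain_def by auto
    show "\<Union>C \<in> A" unfolding A_def
    proof (intro CollectI conjI allI impI)
      show "a \<in> \<Union>C" using C(1) CA unfolding A_def by blast
    next
      fix x y assume "x \<in> \<Union>C" "x \<le> y" then show "y \<in> \<Union>C" using CA unfolding A_def by blast
    next
      fix x y assume "x \<in> \<Union>C" "y \<in> \<Union>C"
      then obtain X Y where XY: "X \<in> C" "Y \<in> C" "x \<in> X" "y \<in> Y" by blast
      show "inf x y \<in> \<Union>C"
      proof (cases "X \<subseteq> Y")
        case True then show ?thesis using XY CA unfolding A_def by blast
      next
        case False then have "Y \<subseteq> X" using ch XY by blast
        then show ?thesis using XY CA unfolding A_def by blast
      qed
    next
      show "\<Union>C \<inter> J = {}" using CA unfolding A_def by blast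
    qed
  qed
  then obtain M where M: "M \<in> A" and Mmax: "\<forall>X\<in>A. M \<subseteq> X \<longrightarrow> X = M" by blast
  have Mup: "\<forall>x y. x \<in> M \<longrightarrow> x \<le> y \<longrightarrow> y \<in> M" and Minf: "\<forall>x y. x\<in>M \<longrightarrow> y\<in>M \<longrightarrow> inf x y \<in> M"
    and MJ: "M \<inter> J = {}" and aM: "a \<in> M" using M unfolding A_def by auto
  have topM: "top \<in> M" using Mup aM by auto
  have key: "\<exists>f\<in>M. inf f c \<in> J" if cM: "c \<notin> M" for c
  proof (rule ccontr)
    assume nk: "\<not> (\<exists>f\<in>M. inf f c \<in> J)"
    define Mc where "Mc = {y. \<exists>f\<in>M. inf f c \<le> y}"
    have "Mc \<in> A" unfolding A_def
    proof (intro CollectI conjI allI impI)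
      show "a \<in> Mc" unfolding Mc_def using aM inf_le1 by blast
    next
      fix x y assume "x \<in> Mc" "x \<le> y" then show "y \<in> Mc" unfolding Mc_def by (auto intro: order_trans)
    next
      fix x y assume "x \<in> Mc" "y \<in> Mc"
      then obtain f1 f2 where f: "f1 \<in> M" "f2 \<in> M" "inf f1 c \<le> x" "inf f2 c \<le> y"
        unfolding Mc_def by blast
      have "inf (inf f1 f2) c \<le> inf x y" using f(3,4)
        by (meson inf_le1 inf_le2 le_inf_iff order_trans)
      then show "inf x y \<in> Mc" unfolding Mc_def using Minf f(1,2) by blast
    next
      show "Mc \<inter> J = {}"
      proof (rule ccontr)
        assume "Mc \<inter> J \<noteq> {}"
        then obtain y f where "f \<in> M" "inf f c \<le> y" "y \<in> J" unfolding Mc_def by blast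
        then show False using nk Jd by blast
      qed
    qed
    moreover have "M \<subseteq> Mc" unfolding Mc_def using inf_le1 by blast
    moreover have "c \<in> Mc" unfolding Mc_def using topM by auto
    ultimately show False using Mmax cM by blast
  qed
  have "prime_filter M" unfolding prime_filter_def
  proof (intro conjI allI impI)
    show "top \<in> M" by (rule topM)
    show "bot \<notin> M" using J0 MJ by blast
  next
    fix x y assume "x \<in> M" "x \<le> y" then show "y \<in> M" using Mup by blast
  next
    fix x y assume "x \<in> M" "y \<in> M" then show "inf x y \<in> M" using Minf by blast
  next
    fix c d assume cd: "sup c d \<in> M"
    show "c \<in> M \<or> d \<in> M"
    proof (rule ccontr)
      assume "\<not> (c \<in> M \<or> d \<in> M)"
      then obtain f1 f2 where f: "f1 \<in> M" "inf f1 c \<in> J" "f2 \<in> M" "inf f2 d \<in> J"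
        using key by blast
      have "inf (inf f1 f2) (sup c d) \<le> sup (inf f1 c) (inf f2 d)"
        unfolding inf_sup_distrib1 by (rule sup_mono) (meson inf_mono inf_le1 inf_le2 order_refl order_trans)+
      moreover have "sup (inf f1 c) (inf f2 d) \<in> J" using Js f by blast
      ultimately have "inf (inf f1 f2) (sup c d) \<in> J" using Jd by blast
      moreover have "inf (inf f1 f2) (sup c d) \<in> M" using Minf f cd by blast
      ultimately show False using MJ by blast
    qed
  qed
  then show ?thesis using aM MJ by blast
qed

lemma hard:
  assumes ch: "co_heyting TYPE('a::{distrib_lattice,bounded_lattice})"
    and p: "prime_filter (p::'a set)" and ab: "cdiff a b \<in> p"
  shows "\<exists>q. prime_filter q \<and> a \<in> q \<and> b \<notin> q \<and> q \<subseteq> p"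
proof -
  define J where "J = {c. \<exists>e. e \<notin> p \<and> c \<le> sup b e}"
  have pb: "bot \<notin> p" using p unfolding prime_filter_def by blast
  have "\<exists>F. prime_filter F \<and> a \<in> F \<and> F \<inter> J = {}"
  proof (rule pft)
    show "bot \<in> J" unfolding J_def using pb by auto
    show "\<forall>c d. c \<in> J \<longrightarrow> d \<le> c \<longrightarrow> d \<in> J" unfolding J_def by (auto intro: order_trans)
    show "\<forall>c d. c\<in>J \<longrightarrow> d\<in>J \<longrightarrow> sup c d \<in> J"
    proof (intro allI impI)
      fix c d assume "c \<in> J" "d \<in> J"
      then obtain e1 e2 where e: "e1 \<notin> p" "c \<le> sup b e1" "e2 \<notin> p" "d \<le> sup b e2"
        unfolding J_def by blast
      have "sup e1 e2 \<notin> p" using e p unfolding prime_filter_def by blast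
      moreover have "sup c d \<le> sup b (sup e1 e2)" using e(2,4)
        by (meson le_supI order_trans sup_mono sup_ge1 sup_ge2 order_refl)
      ultimately show "sup c d \<in> J" unfolding J_def by blast
    qed
    show "a \<notin> J"
    proof
      assume "a \<in> J"
      then obtain e where "e \<notin> p" "a \<le> sup b e" unfolding J_def by blast
      then show False using cdiff_props(2)[OF ch] ab p unfolding prime_filter_def by blast
    qed
  qed
  then obtain F where F: "prime_filter F" "a \<in> F" "F \<inter> J = {}" by blast
  have "b \<in> J" unfolding J_def using pb by auto
  moreover have "F \<subseteq> p"
  proof
    fix c assume "c \<in> F"
    moreover have "c \<notin> p \<Longrightarrow> c \<in> J" unfolding J_def by auto
    ultimately show "c \<in> p" using F(3) by blast
  qed
  ultimately show ?thesis using F by blast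
qed

lemma nonzero_prime:
  assumes "(a::'a::{distrib_lattice,bounded_lattice}) \<noteq> bot"
  shows "\<exists>F. prime_filter F \<and> a \<in> F"
proof -
  have "\<exists>F. prime_filter F \<and> a \<in> F \<and> F \<inter> {bot} = {}"
    by (rule pft) (use assms bot_unique in auto)
  then show ?thesis by blast
qed

lemma dir2:
  assumes ch: "co_heyting TYPE('a::{distrib_lattice,bounded_lattice})"
  shows "\<forall>p::'a set. prime_filter p \<longrightarrow> Pterm x n \<in> p \<longrightarrow>
     (\<exists>q. prime_filter q \<and> q \<subseteq> p \<and> (\<forall>k. coheight_ge p k \<longrightarrow> coheight_ge q (n+k)))"
proof (induction n)
  case 0
  then show ?case by auto
next
  case (Suc n)
  show ?case
  proof (intro allI impI)
    fix p :: "'a set"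
    assume p: "prime_filter p" and P: "Pterm x (Suc n) \<in> p"
    have h: "cdiff (Pterm x n) (x (Suc n)) \<in> p" "x (Suc n) \<in> p"
    proof -
      have "\<forall>a b. a \<in> p \<longrightarrow> a \<le> b \<longrightarrow> b \<in> p" using p unfolding prime_filter_def by blast
      moreover have "inf (cdiff (Pterm x n) (x (Suc n))) (x (Suc n)) \<in> p" using P by simp
      ultimately show "cdiff (Pterm x n) (x (Suc n)) \<in> p" "x (Suc n) \<in> p"
        using inf_le1[of "cdiff (Pterm x n) (x (Suc n))" "x (Suc n)"]
          inf_le2[of "cdiff (Pterm x n) (x (Suc n))" "x (Suc n)"] by blast+
    qed
    obtain q where q: "prime_filter q" "Pterm x n \<in> q" "x (Suc n) \<notin> q" "q \<subseteq> p"
      using hard[OF ch p h(1)] by blast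
    have qp: "q \<subset> p" using q h(2) by blast
    obtain q' where q': "prime_filter q'" "q' \<subseteq> q" "\<forall>k. coheight_ge q k \<longrightarrow> coheight_ge q' (n+k)"
      using Suc.IH q by blast
    have "\<forall>k. coheight_ge p k \<longrightarrow> coheight_ge q' (Suc n+k)"
    proof (intro allI impI)
      fix k assume ck: "coheight_ge p k"
      have "coheight_ge q (Suc k)" unfolding coheight_ge.simps using p qp ck by blast
      then have "coheight_ge q' (n + Suc k)" using q'(3) by blast
      then show "coheight_ge q' (Suc n + k)" by simp
    qed
    then show "\<exists>q. prime_filter q \<and> q \<subseteq> p \<and> (\<forall>k. coheight_ge p k \<longrightarrow> coheight_ge q (Suc n + k))"
      using q' q by blast
  qed
qed

theorem proposition3p12:
  fixes d :: nat
  assumes "co_heyting TYPE('a::{distrib_lattice,bounded_lattice})"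
  shows "dim_le TYPE('a) d \<longleftrightarrow> (\<forall>x :: nat \<Rightarrow> 'a. Pterm x (Suc d) = bot)"
proof
  assume dl: "dim_le TYPE('a) d"
  show "\<forall>x :: nat \<Rightarrow> 'a. Pterm x (Suc d) = bot"
  proof (rule allI, rule ccontr)
    fix x :: "nat \<Rightarrow> 'a"
    assume "Pterm x (Suc d) \<noteq> bot"
    then obtain p where p: "prime_filter p" "Pterm x (Suc d) \<in> p" using nonzero_prime by blast
    then obtain q :: "'a set" where q: "prime_filter q" "\<forall>k. coheight_ge p k \<longrightarrow> coheight_ge q (Suc d + k)"
      using dir2[OF assms, of x "Suc d"] by blast
    have "coheight_ge p 0" by simp
    then have "coheight_ge q (Suc d + 0)" using q(2) by blast
    then have "prime_filter q" "coheight_ge q (Suc d)" using q(1) by simp_all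
    then show False using dl unfolding dim_le_def by auto
  qed
next
  assume z: "\<forall>x :: nat \<Rightarrow> 'a. Pterm x (Suc d) = bot"
  show "dim_le TYPE('a) d" unfolding dim_le_def
  proof (intro allI impI notI)
    fix p :: "'a set" assume p: "prime_filter p" "coheight_ge p (Suc d)"
    have "Pterm (\<lambda>_. bot) 0 \<in> p" using p unfolding prime_filter_def by simp
    then obtain x' and r :: "'a set" where "prime_filter r" "Pterm x' (0 + Suc d) \<in> r"
      using dir1[OF assms, of "Suc d"] p by blast
    then show False using z unfolding prime_filter_def by auto
  qed
qed

end
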